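(* Assume (F), fix $\alpha\in\,]0,1[$, and let $0\le u^-<u^+\le V$ with $\hat\rho_{u^+}>\check\rho_{u^-}$. Then $\check\rho_{u^+}<\check\rho_{u^-}<\hat\rho_{u^+}<\hat\rho_{u^-}$ and $$u^+-u^-\ \ge\ \frac{\beta}{2}\,\big(\hat\rho_{u^-}-\hat\rho_{u^+}\big).$$
   Context: Hypothesis (F): $R>0$; $f\in C^2([0,R];[0,+\infty))$ with $f(\rho)=\rho v(\rho)$, $v\in C^2([0,R];[0,+\infty))$; $f(0)=f(R)=0$; there are $B\ge\beta>0$ with $-B\le f''\le-\beta$ on $[0,R]$; $v'(\rho)<0$ for $\rho\in\,]0,R[$. Let $V:=\max_{[0,R]}v=v(0)$. Define $f_\alpha(\rho):=\alpha f(\rho/\alpha)$ for $\rho\in[0,\alpha R]$. For $u\in[0,V]$: $\tilde\rho_u$ is the unique solution of $f_\alpha'(\rho)=u$; $\varphi_u(\rho):=f_\alpha(\tilde\rho_u)+u(\rho-\tilde\rho_u)$ for $\rho\in[0,R]$; $\mathcal I_u:=\{\rho\in[0,R]: f(\rho)=\varphi_u(\rho)\}$, $\check\rho_u:=\min\mathcal I_u$, $\hat\rho_u:=\max\mathcal I_u$. *)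

theory Defs
  imports "HOL-Analysis.Analysis"
begin

definition f_alpha :: "(real \<Rightarrow> real) \<Rightarrow> real \<Rightarrow> real \<Rightarrow> real" where
  "f_alpha f \<alpha> \<rho> = \<alpha> * f (\<rho> / \<alpha>)"

definition rho_tilde :: "(real \<Rightarrow> real) \<Rightarrow> real \<Rightarrow> real \<Rightarrow> real \<Rightarrow> real" where
  "rho_tilde f R \<alpha> u = (THE \<rho>. \<rho> \<in> {0..\<alpha>*R} \<and>
      (f_alpha f \<alpha> has_real_derivative u) (at \<rho> within {0..\<alpha>*R}))"

definition phi :: "(real \<Rightarrow> real) \<Rightarrow> real \<Rightarrow> real \<Rightarrow> real \<Rightarrow> real \<Rightarrow> real" where
  "phi f R \<alpha> u \<rho> = f_alpha f \<alpha> (rho_tilde f R \<alpha> u) + u * (\<rho> - rho_tilde f R \<alpha> u)"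

definition I_set :: "(real \<Rightarrow> real) \<Rightarrow> real \<Rightarrow> real \<Rightarrow> real \<Rightarrow> real set" where
  "I_set f R \<alpha> u = {\<rho> \<in> {0..R}. f \<rho> = phi f R \<alpha> u \<rho>}"

definition rho_check :: "(real \<Rightarrow> real) \<Rightarrow> real \<Rightarrow> real \<Rightarrow> real \<Rightarrow> real" where
  "rho_check f R \<alpha> u = Inf (I_set f R \<alpha> u)"

definition rho_hat :: "(real \<Rightarrow> real) \<Rightarrow> real \<Rightarrow> real \<Rightarrow> real \<Rightarrow> real" where
  "rho_hat f R \<alpha> u = Sup (I_set f R \<alpha> u)"

end

theory Submission
  imports Defs
begin

lemma deriv_uniq:
  fixes g :: "real \<Rightarrow> real"
  assumes "a < b" "x \<in> {a..b}"
    "(g has_real_derivative d1) (at x within {a..b})"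
    "(g has_real_derivative d2) (at x within {a..b})"
  shows "d1 = d2"
proof -
  have "(g has_vector_derivative d1) (at x within cbox a b)"
       "(g has_vector_derivative d2) (at x within cbox a b)"
    using assms(3,4) by (auto simp: has_real_derivative_iff_has_vector_derivative)
  then show ?thesis
    using vector_derivative_unique_within_closed_interval[of a b x g d1 d2] assms(1,2) by auto
qed

lemma deriv_nonpos_mono:
  fixes g g' :: "real \<Rightarrow> real"
  assumes "a \<le> b"
    "\<And>x. x \<in> {a..b} \<Longrightarrow> (g has_real_derivative g' x) (at x within {a..b})"
    "\<And>x. x \<in> {a..b} \<Longrightarrow> g' x \<le> 0"
  shows "g b \<le> g a"
proof -
  have "\<exists>x\<in>{a..b}. g b - g a = (\<lambda>h. g' x * h) (b - a)"
    apply (rule mvt_very_simple[OF assms(1)])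
    using assms(2) by (auto simp: has_field_derivative_def)
  then obtain x where "x \<in> {a..b}" "g b - g a = g' x * (b - a)" by auto
  moreover have "g' x * (b - a) \<le> 0" using assms(1) assms(3)[OF \<open>x\<in>_\<close>]
    by (simp add: mult_nonpos_nonneg)
  ultimately show ?thesis by linarith
qed

lemma strong_concave:
  fixes f f' f'' :: "real \<Rightarrow> real"
  assumes f_d1: "\<And>x. x \<in> {0..R} \<Longrightarrow> (f has_real_derivative f' x) (at x within {0..R})"
    and f_d2: "\<And>x. x \<in> {0..R} \<Longrightarrow> (f' has_real_derivative f'' x) (at x within {0..R})"
    and bd: "\<And>x. x \<in> {0..R} \<Longrightarrow> f'' x \<le> - \<beta>"
    and x: "x \<in> {0..R}" and y: "y \<in> {0..R}"
  shows "f y \<le> f x + f' x * (y - x) - \<beta>/2 * (y - x)^2"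
proof -
  have H: "f' t + \<beta> * t \<le> f' s + \<beta> * s" if "s \<le> t" "s \<in> {0..R}" "t \<in> {0..R}" for s t
  proof -
    have "(\<lambda>z. f' z + \<beta> * z) t \<le> (\<lambda>z. f' z + \<beta> * z) s"
    proof (rule deriv_nonpos_mono[where g'="\<lambda>z. f'' z + \<beta>" and g="\<lambda>z. f' z + \<beta> * z"])
      fix z assume z: "z \<in> {s..t}"
      hence zR: "z \<in> {0..R}" using that by auto
      show "((\<lambda>z. f' z + \<beta> * z) has_real_derivative f'' z + \<beta>) (at z within {s..t})"
      proof -
        have d: "((\<lambda>z. f' z + \<beta> * z) has_real_derivative f'' z + \<beta> * 1) (at z within {0..R})"
          by (intro DERIV_add DERIV_cmult DERIV_ident f_d2 zR)
        have "{s..t} \<subseteq> {0..R}" using that by auto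
        from has_field_derivative_subset[OF d this] show ?thesis by simp
      qed
      show "f'' z + \<beta> \<le> 0" using bd[OF zR] by simp
    qed (use that in auto)
    thus ?thesis by simp
  qed
  define G where "G = (\<lambda>z. f z - f x - f' x * (z - x) + \<beta>/2 * (z - x)^2)"
  have dG: "(G has_real_derivative (f' z - f' x + \<beta> * (z - x))) (at z within S)"
    if "z \<in> {0..R}" "S \<subseteq> {0..R}" for z S
    unfolding G_def
    apply (rule has_field_derivative_subset[where s="{0..R}"])
    using f_d1[OF that(1)] that by (auto intro!: derivative_eq_intros simp: field_simps)
  have "G y \<le> 0"
  proof (cases "x \<le> y")
    case True
    have "G y \<le> G x"
    proof (rule deriv_nonpos_mono[OF True])
      fix z assume z: "z \<in> {x..y}"
      show "(G has_real_derivative (f' z - f' x + \<beta> * (z - x))) (at z within {x..y})"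
        using z x y by (intro dG) auto
      show "f' z - f' x + \<beta> * (z - x) \<le> 0" using H[of x z] z x y by (auto simp: algebra_simps)
    qed
    thus ?thesis by (simp add: G_def)
  next
    case False
    have "(\<lambda>z. - G z) x \<le> (\<lambda>z. - G z) y"
    proof (rule deriv_nonpos_mono[where g'="\<lambda>z. - (f' z - f' x + \<beta> * (z - x))" and g="\<lambda>z. - G z"])
      fix z assume z: "z \<in> {y..x}"
      show "((\<lambda>z. - G z) has_real_derivative - (f' z - f' x + \<beta> * (z - x))) (at z within {y..x})"
        using z x y by (intro DERIV_minus dG) auto
      show "- (f' z - f' x + \<beta> * (z - x)) \<le> 0" using H[of z x] z x y by (auto simp: algebra_simps)
    qed (use False in auto)
    thus ?thesis by (simp add: G_def)
  qed
  thus ?thesis by (simp add: G_def)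
qed

lemma I_facts:
  fixes f f' :: "real \<Rightarrow> real"
  assumes SC: "\<And>x y. x \<in> {0..R} \<Longrightarrow> y \<in> {0..R} \<Longrightarrow> f y \<le> f x + f' x * (y - x) - \<beta>/2 * (y - x)^2"
    and cont: "continuous_on {0..R} f"
    and f0: "f 0 = 0" and fR: "f R = 0" and fnn: "\<And>x. x \<in> {0..R} \<Longrightarrow> f x \<ge> 0"
    and beta: "\<beta> > 0" and a: "0 < a" "a < 1" and u: "0 \<le> u"
    and s: "s \<in> {0..R}" and fs: "f' s = u"
    and D_def: "D = (\<lambda>x. f x - (a * f s + u * (x - a * s)))"
    and I_def: "I = {x \<in> {0..R}. D x = 0}"
  shows "Inf I \<in> I" "Sup I \<in> I" "Inf I \<le> a * s" "a * s \<le> Sup I"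
    "\<And>x. x \<in> {0..R} \<Longrightarrow> D x > 0 \<Longrightarrow> Inf I < x \<and> x < Sup I"
    "\<And>x. Inf I \<le> x \<Longrightarrow> x \<le> Sup I \<Longrightarrow> D x \<ge> \<beta>/2 * (x - Inf I) * (Sup I - x)"
proof -
  have s0: "0 \<le> s" "s \<le> R" using s by auto
  have "a * s \<le> 1 * s" using a s0 by (intro mult_right_mono) auto
  hence as: "a * s \<in> {0..R}" using a s0 by auto
  have zR: "0 \<in> {0..R}" using s0 by auto
  have "f 0 \<le> f s + f' s * (0 - s) - \<beta>/2 * (0 - s)^2" using SC[OF s zR] .
  moreover have "\<beta>/2 * (0 - s)^2 \<ge> 0" using beta by simp
  ultimately have fsu: "f s - u * s \<ge> 0" using fs f0 by simp
  have D0: "D 0 \<le> 0"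
  proof -
    have "D 0 = - a * (f s - u * s)" using f0 by (simp add: D_def algebra_simps)
    also have "\<dots> \<le> 0" using a fsu by simp
    finally show ?thesis .
  qed
  have DR: "D R \<le> 0"
  proof -
    have "a * s \<le> R" using as by auto
    hence "u * (R - a * s) \<ge> 0" using u by simp
    moreover have "a * f s \<ge> 0" using a fnn[OF s] by simp
    moreover have "f R \<ge> D R + a * f s + u * (R - a * s)" by (simp add: D_def)
    ultimately show ?thesis using fR by linarith
  qed
  have Das: "D (a * s) \<ge> 0"
  proof -
    have e1: "f 0 \<le> f (a * s) + f' (a * s) * (0 - a * s) - \<beta>/2 * (0 - a * s)^2" using SC[OF as zR] .
    have e2: "f s \<le> f (a * s) + f' (a * s) * (s - a * s) - \<beta>/2 * (s - a * s)^2" using SC[OF as s] .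
    have "\<beta>/2 * (0 - a * s)^2 \<ge> 0" "\<beta>/2 * (s - a * s)^2 \<ge> 0" using beta by simp_all
    hence e1': "f 0 \<le> f (a * s) + f' (a * s) * (0 - a * s)" and e2': "f s \<le> f (a * s) + f' (a * s) * (s - a * s)"
      using e1 e2 by linarith+
    have "(1 - a) * f 0 \<le> (1 - a) * (f (a * s) + f' (a * s) * (0 - a * s))"
      using e1' a by (intro mult_left_mono) auto
    moreover have "a * f s \<le> a * (f (a * s) + f' (a * s) * (s - a * s))"
      using e2' a by (intro mult_left_mono) auto
    ultimately have "(1 - a) * f 0 + a * f s \<le> f (a * s)"
      by (simp add: algebra_simps)
    thus ?thesis using f0 by (simp add: D_def)
  qed
  have contD: "continuous_on {0..R} D"
    unfolding D_def by (intro continuous_intros cont)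
  have clI: "closed I" unfolding I_def
    by (rule continuous_closed_preimage_constant[OF contD]) auto
  have IR: "I \<subseteq> {0..R}" unfolding I_def by auto
  have bb: "bdd_below I" "bdd_above I" using IR by (auto intro: bdd_below_mono bdd_above_mono)
  have ne: "I \<noteq> {}"
  proof -
    have "continuous_on {0..a * s} D" by (rule continuous_on_subset[OF contD]) (use as in auto)
    then obtain y where "0 \<le> y" "y \<le> a * s" "D y = 0" using IVT'[of D 0 0 "a * s"] D0 Das as by auto
    hence "y \<in> I" using as unfolding I_def by auto
    thus ?thesis by auto
  qed
  show cI: "Inf I \<in> I" using closed_contains_Inf[OF ne bb(1) clI] .
  show hI: "Sup I \<in> I" using closed_contains_Sup[OF ne bb(2) clI] .
  have lo: "Inf I \<le> x" if x: "x \<in> {0..R}" "D x \<ge> 0" for x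
  proof (rule ccontr)
    assume "\<not> Inf I \<le> x"
    have "continuous_on {0..x} D" by (rule continuous_on_subset[OF contD]) (use x in auto)
    then obtain y where "0 \<le> y" "y \<le> x" "D y = 0" using IVT'[of D 0 0 x] D0 x by auto
    hence "y \<in> I" using x unfolding I_def by auto
    hence "Inf I \<le> y" using bb(1) by (rule cInf_lower)
    thus False using \<open>\<not> Inf I \<le> x\<close> \<open>y \<le> x\<close> by linarith
  qed
  have hi: "x \<le> Sup I" if x: "x \<in> {0..R}" "D x \<ge> 0" for x
  proof (rule ccontr)
    assume "\<not> x \<le> Sup I"
    have "continuous_on {x..R} D" by (rule continuous_on_subset[OF contD]) (use x in auto)
    then obtain y where "x \<le> y" "y \<le> R" "D y = 0" using IVT2'[of D R 0 x] DR x by auto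
    hence "y \<in> I" using x unfolding I_def by auto
    hence "y \<le> Sup I" using bb(2) by (rule cSup_upper)
    thus False using \<open>\<not> x \<le> Sup I\<close> \<open>x \<le> y\<close> by linarith
  qed
  show "Inf I \<le> a * s" using lo[OF as Das] .
  show "a * s \<le> Sup I" using hi[OF as Das] .
  show "Inf I < x \<and> x < Sup I" if x: "x \<in> {0..R}" "D x > 0" for x
  proof -
    have "x \<notin> I" using x unfolding I_def by auto
    hence "x \<noteq> Inf I" "x \<noteq> Sup I" using cI hI by auto
    moreover have "Inf I \<le> x" "x \<le> Sup I" using lo[of x] hi[of x] x by auto
    ultimately show ?thesis by linarith
  qed
  show "D x \<ge> \<beta>/2 * (x - Inf I) * (Sup I - x)" if x: "Inf I \<le> x" "x \<le> Sup I" for x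
  proof -
    define c where "c = Inf I"
    define h where "h = Sup I"
    have cR: "c \<in> {0..R}" "D c = 0" using cI unfolding c_def I_def by auto
    have hR: "h \<in> {0..R}" "D h = 0" using hI unfolding h_def I_def by auto
    have xR: "x \<in> {0..R}" using cR hR x unfolding c_def h_def by auto
    define k where "k = f' x - u"
    define p where "p = x - c"
    define q where "q = h - x"
    have p0: "p \<ge> 0" "q \<ge> 0" using x unfolding p_def q_def c_def h_def by auto
    have "f c \<le> f x + f' x * (c - x) - \<beta>/2 * (c - x)^2" using SC[OF xR cR(1)] .
    hence A: "0 \<le> D x - k * p - \<beta>/2 * p^2" using cR(2)
      unfolding D_def k_def p_def by (simp add: algebra_simps power2_eq_square)
    have "f h \<le> f x + f' x * (h - x) - \<beta>/2 * (h - x)^2" using SC[OF xR hR(1)] .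
    hence B: "0 \<le> D x + k * q - \<beta>/2 * q^2" using hR(2)
      unfolding D_def k_def q_def by (simp add: algebra_simps power2_eq_square)
    have "0 \<le> q * (D x - k * p - \<beta>/2 * p^2) + p * (D x + k * q - \<beta>/2 * q^2)"
      using A B p0 by (intro add_nonneg_nonneg mult_nonneg_nonneg) auto
    also have "\<dots> = (p + q) * (D x - \<beta>/2 * p * q)" by (simp add: algebra_simps power2_eq_square)
    finally have C: "0 \<le> (p + q) * (D x - \<beta>/2 * p * q)" .
    show ?thesis
    proof (cases "p + q = 0")
      case True
      hence "p = 0" using p0 by auto
      hence "x = c" unfolding p_def by simp
      thus ?thesis using cR(2) True \<open>p = 0\<close> unfolding c_def p_def by simp
    next
      case False
      hence "p + q > 0" using p0 by auto
      hence "0 \<le> D x - \<beta>/2 * p * q" using C by (simp add: zero_le_mult_iff)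
      thus ?thesis unfolding p_def q_def c_def h_def by simp
    qed
  qed
qed

theorem mainTheorem5:
  fixes R \<beta> B \<alpha> u_minus u_plus :: real
    and f f' f'' v v' v'' :: "real \<Rightarrow> real"
  assumes R_pos: "R > 0"
    and f_d1: "\<And>x. x \<in> {0..R} \<Longrightarrow> (f has_real_derivative f' x) (at x within {0..R})"
    and f_d2: "\<And>x. x \<in> {0..R} \<Longrightarrow> (f' has_real_derivative f'' x) (at x within {0..R})"
    and f_C2: "continuous_on {0..R} f''"
    and v_d1: "\<And>x. x \<in> {0..R} \<Longrightarrow> (v has_real_derivative v' x) (at x within {0..R})"
    and v_d2: "\<And>x. x \<in> {0..R} \<Longrightarrow> (v' has_real_derivative v'' x) (at x within {0..R})"
    and v_C2: "continuous_on {0..R} v''"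
    and f_nonneg: "\<And>x. x \<in> {0..R} \<Longrightarrow> f x \<ge> 0"
    and v_nonneg: "\<And>x. x \<in> {0..R} \<Longrightarrow> v x \<ge> 0"
    and f_eq: "\<And>x. x \<in> {0..R} \<Longrightarrow> f x = x * v x"
    and f0: "f 0 = 0" and fR: "f R = 0"
    and beta_pos: "\<beta> > 0" and B_ge: "B \<ge> \<beta>"
    and f''_bounds: "\<And>x. x \<in> {0..R} \<Longrightarrow> - B \<le> f'' x \<and> f'' x \<le> - \<beta>"
    and v'_neg: "\<And>x. x \<in> {0<..<R} \<Longrightarrow> v' x < 0"
    and alpha: "\<alpha> \<in> {0<..<1}"
    and u_bounds: "0 \<le> u_minus" "u_minus < u_plus" "u_plus \<le> (SUP x\<in>{0..R}. v x)"
    and hyp: "rho_hat f R \<alpha> u_plus > rho_check f R \<alpha> u_minus"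
  shows "rho_check f R \<alpha> u_plus < rho_check f R \<alpha> u_minus
       \<and> rho_check f R \<alpha> u_minus < rho_hat f R \<alpha> u_plus
       \<and> rho_hat f R \<alpha> u_plus < rho_hat f R \<alpha> u_minus
       \<and> u_plus - u_minus \<ge> \<beta> / 2 * (rho_hat f R \<alpha> u_minus - rho_hat f R \<alpha> u_plus)"
proof -
  have SC: "\<And>x y. x \<in> {0..R} \<Longrightarrow> y \<in> {0..R} \<Longrightarrow> f y \<le> f x + f' x * (y - x) - \<beta>/2 * (y - x)^2"
    using strong_concave[OF f_d1 f_d2] f''_bounds by blast
  have contf: "continuous_on {0..R} f" using f_d1 by (rule DERIV_continuous_on)
  have contf': "continuous_on {0..R} f'" using f_d2 by (rule DERIV_continuous_on)
  have a0: "0 < \<alpha>" "\<alpha> < 1" using alpha by auto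
  have zR: "0 \<in> {0..R}" "R \<in> {0..R}" using R_pos by auto
  have strict: "(f' x - f' y) * (y - x) \<ge> \<beta> * (y - x)^2" if "x \<in> {0..R}" "y \<in> {0..R}" for x y
    using SC[OF that] SC[OF that(2,1)] by (simp add: algebra_simps power2_eq_square)
  have inj: "x = y" if "x \<in> {0..R}" "y \<in> {0..R}" "f' x = f' y" for x y
  proof (rule ccontr)
    assume "x \<noteq> y"
    hence "(y - x)^2 > 0" by simp
    hence "\<beta> * (y - x)^2 > 0" using beta_pos by simp
    thus False using strict[OF that(1,2)] that(3) by simp
  qed
  have f'R: "f' R \<le> 0"
  proof -
    have "0 \<le> f' R * (0 - R) - \<beta>/2 * (0 - R)^2" using SC[OF zR(2) zR(1)] f0 fR by simp
    moreover have "\<beta>/2 * (0 - R)^2 \<ge> 0" using beta_pos by simp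
    ultimately have "f' R * R \<le> 0" by (simp add: algebra_simps)
    thus ?thesis using R_pos by (simp add: mult_le_0_iff)
  qed
  have f'0: "f' 0 = v 0"
  proof -
    have d: "((\<lambda>x. x * v x) has_real_derivative 1 * v 0 + 0 * v' 0) (at 0 within {0..R})"
      using DERIV_mult[OF DERIV_ident v_d1[OF zR(1)]] by simp
    have "(f has_real_derivative 1 * v 0 + 0 * v' 0) (at 0 within {0..R})"
      by (rule has_field_derivative_transform_within[OF d, of 1]) (use zR f_eq in auto)
    from deriv_uniq[OF R_pos zR(1) f_d1[OF zR(1)] this] show ?thesis by simp
  qed
  have vle: "v x \<le> v 0" if "x \<in> {0..R}" for x
  proof (cases "x = 0")
    case False
    hence xp: "x > 0" using that by auto
    have "f x \<le> f 0 + f' 0 * (x - 0) - \<beta>/2 * (x - 0)^2" using SC[OF zR(1) that] .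
    moreover have "\<beta>/2 * (x - 0)^2 \<ge> 0" using beta_pos by simp
    ultimately have "x * v x \<le> x * v 0" using f_eq[OF that] f0 f'0 by (simp add: mult.commute)
    thus ?thesis using xp by simp
  qed simp
  have V: "(SUP x\<in>{0..R}. v x) \<le> f' 0"
    using vle f'0 zR by (intro cSUP_least) auto
  have per_u: "\<exists>s\<in>{0..R}. f' s = u \<and> rho_tilde f R \<alpha> u = \<alpha> * s \<and>
      I_set f R \<alpha> u = {x \<in> {0..R}. (\<lambda>x. f x - (\<alpha> * f s + u * (x - \<alpha> * s))) x = 0}"
    if u: "0 \<le> u" "u \<le> f' 0" for u
  proof -
    obtain s where s: "0 \<le> s" "s \<le> R" "f' s = u"
      using IVT2'[of f' R u 0, OF _ _ _ contf'] f'R u R_pos by auto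
    have sR: "s \<in> {0..R}" using s by auto
    have aR: "0 < \<alpha> * R" using a0 R_pos by simp
    have fad: "(f_alpha f \<alpha> has_real_derivative f' (r / \<alpha>)) (at r within {0..\<alpha>*R})"
      if r: "r \<in> {0..\<alpha>*R}" for r
    proof -
      have img: "(\<lambda>r. r / \<alpha>) ` {0..\<alpha>*R} \<subseteq> {0..R}" using a0
        by (auto simp: field_simps)
      have rR: "r / \<alpha> \<in> {0..R}" using subsetD[OF img imageI[OF r]] by simp
      have d1: "(f has_real_derivative f' (r/\<alpha>)) (at ((\<lambda>r. r / \<alpha>) r) within ((\<lambda>r. r / \<alpha>) ` {0..\<alpha>*R}))"
        using has_field_derivative_subset[OF f_d1[OF rR] img] by simp
      have d2: "((\<lambda>r. r / \<alpha>) has_real_derivative 1 / \<alpha>) (at r within {0..\<alpha>*R})"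
        using a0 by (auto intro!: derivative_eq_intros)
      have "(f \<circ> (\<lambda>r. r / \<alpha>) has_real_derivative f' (r/\<alpha>) * (1/\<alpha>)) (at r within {0..\<alpha>*R})"
        using DERIV_image_chain[OF d1 d2] .
      from DERIV_cmult[OF this, of \<alpha>] show ?thesis using a0
        by (simp add: f_alpha_def[abs_def] o_def)
    qed
    have as: "\<alpha> * s \<in> {0..\<alpha>*R}" using a0 s by auto
    have rt: "rho_tilde f R \<alpha> u = \<alpha> * s"
      unfolding rho_tilde_def
    proof (rule the_equality)
      show "\<alpha> * s \<in> {0..\<alpha> * R} \<and> (f_alpha f \<alpha> has_real_derivative u) (at (\<alpha> * s) within {0..\<alpha> * R})"
      proof -
        have "\<alpha> * s / \<alpha> = s" using a0 by simp
        thus ?thesis using as fad[OF as] s(3) by metis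
      qed
      fix r assume r: "r \<in> {0..\<alpha> * R} \<and> (f_alpha f \<alpha> has_real_derivative u) (at r within {0..\<alpha> * R})"
      have r1: "r \<in> {0..\<alpha> * R}" using r by (rule conjunct1)
      have "f' (r / \<alpha>) = u" using deriv_uniq[OF aR r1 fad[OF r1] conjunct2[OF r]] .
      moreover have rR: "r / \<alpha> \<in> {0..R}" using r1 a0 by (auto simp: field_simps)
      ultimately have "r / \<alpha> = s" using inj[OF rR sR] s(3) by simp
      thus "r = \<alpha> * s" using a0 by (auto simp: field_simps)
    qed
    have "I_set f R \<alpha> u = {x \<in> {0..R}. (\<lambda>x. f x - (\<alpha> * f s + u * (x - \<alpha> * s))) x = 0}"
      unfolding I_set_def phi_def rt f_alpha_def using a0 by auto
    thus ?thesis using sR s rt by auto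
  qed
  have up0: "u_plus \<le> f' 0" using u_bounds V by linarith
  have um0: "u_minus \<le> f' 0" "0 \<le> u_plus" using u_bounds up0 by linarith+
  from per_u[OF um0(2) up0] obtain sp where sp1: "sp \<in> {0..R}" and
    sp2: "f' sp = u_plus \<and> rho_tilde f R \<alpha> u_plus = \<alpha> * sp \<and>
      I_set f R \<alpha> u_plus = {x \<in> {0..R}. (\<lambda>x. f x - (\<alpha> * f sp + u_plus * (x - \<alpha> * sp))) x = 0}" ..
  have sp: "sp \<in> {0..R}" "f' sp = u_plus" using sp1 sp2 by simp_all
  have Ip: "I_set f R \<alpha> u_plus = {x \<in> {0..R}. (\<lambda>x. f x - (\<alpha> * f sp + u_plus * (x - \<alpha> * sp))) x = 0}"
    using sp2 by (elim conjE)
  from per_u[OF u_bounds(1) um0(1)] obtain sm where sm1: "sm \<in> {0..R}" and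
    sm2: "f' sm = u_minus \<and> rho_tilde f R \<alpha> u_minus = \<alpha> * sm \<and>
      I_set f R \<alpha> u_minus = {x \<in> {0..R}. (\<lambda>x. f x - (\<alpha> * f sm + u_minus * (x - \<alpha> * sm))) x = 0}" ..
  have sm: "sm \<in> {0..R}" "f' sm = u_minus" using sm1 sm2 by simp_all
  have Im: "I_set f R \<alpha> u_minus = {x \<in> {0..R}. (\<lambda>x. f x - (\<alpha> * f sm + u_minus * (x - \<alpha> * sm))) x = 0}"
    using sm2 by (elim conjE)
  define Dp where "Dp = (\<lambda>x. f x - (\<alpha> * f sp + u_plus * (x - \<alpha> * sp)))"
  define Dm where "Dm = (\<lambda>x. f x - (\<alpha> * f sm + u_minus * (x - \<alpha> * sm)))"
  have Ip': "I_set f R \<alpha> u_plus = {x \<in> {0..R}. Dp x = 0}" using Ip unfolding Dp_def by simp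
  have Im': "I_set f R \<alpha> u_minus = {x \<in> {0..R}. Dm x = 0}" using Im unfolding Dm_def by simp
  define cp where "cp = rho_check f R \<alpha> u_plus"
  define hp where "hp = rho_hat f R \<alpha> u_plus"
  define cm where "cm = rho_check f R \<alpha> u_minus"
  define hm where "hm = rho_hat f R \<alpha> u_minus"
  note FP = I_facts[OF SC contf f0 fR f_nonneg beta_pos a0 um0(2) sp Dp_def Ip',
     folded rho_check_def rho_hat_def, folded cp_def hp_def]
  note FM = I_facts[OF SC contf f0 fR f_nonneg beta_pos a0 u_bounds(1) sm Dm_def Im',
     folded rho_check_def rho_hat_def, folded cm_def hm_def]
  have hyp': "cm < hp" using hyp unfolding cm_def hp_def .
  have cpI: "cp \<in> {0..R}" "Dp cp = 0" using FP(1) Ip' unfolding cp_def rho_check_def by auto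
  have hpI: "hp \<in> {0..R}" "Dp hp = 0" using FP(2) Ip' unfolding hp_def rho_hat_def by auto
  have cmI: "cm \<in> {0..R}" "Dm cm = 0" using FM(1) Im' unfolding cm_def rho_check_def by auto
  have hmI: "hm \<in> {0..R}" "Dm hm = 0" using FM(2) Im' unfolding hm_def rho_hat_def by auto
  define du where "du = u_plus - u_minus"
  have du0: "du > 0" using u_bounds unfolding du_def by simp
  define p where "p = \<alpha> * ((f sm - u_minus * sm) - (f sp - u_plus * sp)) / du"
  have key: "Dm x = Dp x + du * (x - p)" for x
    using du0 unfolding Dm_def Dp_def p_def du_def by (simp add: field_simps)
  have spm: "sp \<noteq> sm" using sp(2) sm(2) u_bounds by auto
  have sq: "(sp - sm)^2 > 0" using spm by simp
  have p1: "\<alpha> * sp < p"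
  proof -
    have "f sp \<le> f sm + f' sm * (sp - sm) - \<beta>/2 * (sp - sm)^2" using SC[OF sm(1) sp(1)] .
    moreover have "\<beta>/2 * (sp - sm)^2 > 0" using sq beta_pos by simp
    ultimately have "f sp - f sm - u_minus * (sp - sm) < 0" using sm(2) by simp
    hence "\<alpha> * (f sp - f sm - u_minus * (sp - sm)) < 0" using a0 by (simp add: mult_pos_neg)
    moreover have "du * (\<alpha> * sp - p) = \<alpha> * (f sp - f sm - u_minus * (sp - sm))"
      using key[of "\<alpha> * sp"] unfolding Dm_def Dp_def by (simp add: algebra_simps)
    ultimately have "du * (\<alpha> * sp - p) < 0" by simp
    thus ?thesis using du0 by (simp add: mult_less_0_iff)
  qed
  have p2: "p < \<alpha> * sm"
  proof -
    have "f sm \<le> f sp + f' sp * (sm - sp) - \<beta>/2 * (sm - sp)^2" using SC[OF sp(1) sm(1)] .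
    moreover have "\<beta>/2 * (sm - sp)^2 > 0" using sq beta_pos by (simp add: power2_commute)
    ultimately have "f sp + u_plus * (sm - sp) - f sm > 0" using sp(2) by simp
    hence "\<alpha> * (f sp + u_plus * (sm - sp) - f sm) > 0" using a0 by simp
    moreover have "du * (\<alpha> * sm - p) = \<alpha> * (f sp + u_plus * (sm - sp) - f sm)"
      using key[of "\<alpha> * sm"] unfolding Dm_def Dp_def by (simp add: algebra_simps)
    ultimately have "du * (\<alpha> * sm - p) > 0" by simp
    thus ?thesis using du0 by (simp add: zero_less_mult_iff)
  qed
  have c1: "cm < p"
  proof (rule ccontr)
    assume "\<not> cm < p"
    hence pc: "p \<le> cm" by simp
    have "cp < cm" using FP(3) p1 pc unfolding cp_def by linarith
    hence "Dp cm \<ge> \<beta>/2 * (cm - cp) * (hp - cm)" "\<beta>/2 * (cm - cp) * (hp - cm) > 0"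
      using FP(6)[of cm] hyp' beta_pos by auto
    moreover have "Dm cm \<ge> Dp cm" using key[of cm] pc du0 by simp
    ultimately show False using cmI(2) by linarith
  qed
  have "du * (p - cm) > 0" using c1 du0 by simp
  hence Dpcm: "Dp cm > 0" using key[of cm] cmI(2) by (simp add: algebra_simps)
  have o1: "cp < cm" using FP(5)[of cm] cmI(1) Dpcm by blast
  have pR: "p \<in> {0..R}" using cmI(1) c1 p2 FM(4) hmI(1) unfolding hm_def by auto
  have Dmp: "Dm p > 0"
  proof -
    have "Dm p \<ge> \<beta>/2 * (p - cm) * (hm - p)" using FM(6)[of p] c1 p2 FM(4)
      unfolding cm_def hm_def by auto
    moreover have "\<beta>/2 * (p - cm) * (hm - p) > 0" using c1 p2 FM(4) beta_pos unfolding hm_def by auto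
    ultimately show ?thesis by linarith
  qed
  have "Dp p > 0" using Dmp key[of p] by simp
  hence php: "p < hp" using FP(5)[of p] pR by blast
  have Dmhp: "Dm hp = du * (hp - p)" using key[of hp] hpI(2) by simp
  hence "Dm hp > 0" using php du0 by simp
  hence o3: "hp < hm" using FM(5)[of hp] hpI(1) by blast
  have "Dm hp \<ge> \<beta>/2 * (hp - cm) * (hm - hp)" using FM(6)[of hp] hyp' o3 unfolding cm_def hm_def by simp
  hence "du * (hp - cm) \<ge> \<beta>/2 * (hp - cm) * (hm - hp)"
  proof -
    assume A: "Dm hp \<ge> \<beta>/2 * (hp - cm) * (hm - hp)"
    have "du * (hp - p) \<le> du * (hp - cm)" using c1 du0 by simp
    thus ?thesis using A Dmhp by linarith
  qed
  hence "(hp - cm) * du \<ge> (hp - cm) * (\<beta>/2 * (hm - hp))" by (simp add: algebra_simps)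
  hence fin: "du \<ge> \<beta>/2 * (hm - hp)" using hyp' by (simp add: mult_le_cancel_left_pos)
  show ?thesis using o1 hyp' o3 fin unfolding cp_def cm_def hp_def hm_def du_def by simp
qed

end
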